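(* For all real $x,u,v$, $$\sum_{m,n=0}^{\infty}H_{m,n}(x)\frac{u^m}{m!}\frac{v^n}{n!}=\exp\!\left(-u^2+(2u+v)x-uv\right).$$
   Context: For integers $m,n\ge 0$, the two-index Hermite polynomial is $H_{m,n}(x)=\left(-\frac{d}{dx}+2x\right)^m(x^n)$, i.e. the operator $f\mapsto -f'+2xf$ applied $m$ times to $x^n$. *)

theory Defs
  imports "HOL-Analysis.Analysis" "HOL-Computational_Algebra.Polynomial"
begin

definition hermite_op :: "real poly \<Rightarrow> real poly" where
  "hermite_op p = - pderiv p + [:0, 2:] * p"

definition H2 :: "nat \<Rightarrow> nat \<Rightarrow> real poly" where
  "H2 m n = (hermite_op ^^ m) (monom 1 n)"

end

theory Submission
  imports Defs
begin

lemma hop_X: "hermite_op (pCons 0 p) = pCons 0 (hermite_op p) - p"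
  unfolding hermite_op_def
  by (simp add: pderiv_pCons pderiv_mult algebra_simps smult_add_right smult_diff_right)

lemma hop_diff: "hermite_op (p - q) = hermite_op p - hermite_op q"
  unfolding hermite_op_def by (simp add: pderiv_diff algebra_simps smult_diff_right)

lemma hop_smult: "hermite_op (smult c p) = smult c (hermite_op p)"
  unfolding hermite_op_def by (simp add: pderiv_smult algebra_simps smult_add_right smult_diff_right)

lemma hopn_diff: "(hermite_op ^^ k) (p - q) = (hermite_op ^^ k) p - (hermite_op ^^ k) q"
  by (induction k) (simp_all add: hop_diff)

lemma hopn_smult: "(hermite_op ^^ k) (smult c p) = smult c ((hermite_op ^^ k) p)"
  by (induction k) (simp_all add: hop_smult)

lemma hopn_X: "(hermite_op ^^ k) (pCons 0 p) = pCons 0 ((hermite_op ^^ k) p) - smult (real k) ((hermite_op ^^ (k - 1)) p)"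
proof (induction k)
  case 0 then show ?case by simp
next
  case (Suc k)
  show ?case
  proof (cases k)
    case 0 then show ?thesis by (simp add: hop_X)
  next
    case (Suc j)
    have "(hermite_op ^^ Suc k) (pCons 0 p) = hermite_op (pCons 0 ((hermite_op ^^ k) p) - smult (real k) ((hermite_op ^^ (k - 1)) p))"
      using Suc.IH by simp
    also have "\<dots> = pCons 0 ((hermite_op ^^ Suc k) p) - (hermite_op ^^ k) p - smult (real k) ((hermite_op ^^ k) p)"
      using Suc by (simp add: hop_diff hop_X hop_smult)
    finally show ?thesis by (simp add: smult_add_left algebra_simps)
  qed
qed

lemma H2_Suc_n: "poly (H2 m (Suc n)) x = x * poly (H2 m n) x - real m * poly (H2 (m - 1) n) x"
proof -
  have "monom (1::real) (Suc n) = pCons 0 (monom 1 n)"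
    by (simp add: monom_Suc)
  then show ?thesis unfolding H2_def by (simp add: hopn_X)
qed

lemma H2_Suc_0: "poly (H2 (Suc m) 0) x = 2 * poly (H2 m 1) x"
proof -
  have "hermite_op (monom 1 0) = smult 2 (monom 1 1)"
    unfolding hermite_op_def by (simp add: monom_0 monom_Suc)
  then show ?thesis unfolding H2_def funpow_Suc_right o_def by (simp add: hopn_smult del: funpow.simps)
qed

definition ca :: "real \<Rightarrow> nat \<Rightarrow> real" where "ca x j = (2*x)^j / fact j"
definition cc :: "nat \<Rightarrow> real" where "cc k = (if even k then (-1)^(k div 2) / fact (k div 2) else 0)"
definition D :: "real \<Rightarrow> nat \<Rightarrow> real" where "D x m = (\<Sum>i\<le>m. ca x i * cc (m - i))"

lemma ca_Suc: "real (Suc i) * ca x (Suc i) = 2 * x * ca x i"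
  unfolding ca_def by (simp add: fact_Suc field_simps del: of_nat_Suc)

lemma cc_rec: "real k * cc k = (if k \<ge> 2 then -2 * cc (k - 2) else 0)"
proof (cases "even k")
  case True
  then obtain b where k: "k = 2 * b" by blast
  show ?thesis
  proof (cases b)
    case 0 then show ?thesis using k by (simp add: cc_def)
  next
    case (Suc b')
    have "k - 2 = 2 * b'" using k Suc by simp
    then show ?thesis using k Suc by (simp add: cc_def fact_Suc field_simps del: of_nat_Suc) simp
  qed
next
  case False
  then have "odd (k - 2) \<or> k < 2" by auto
  then show ?thesis using False by (auto simp: cc_def)
qed

lemma D_rec: "real (Suc (Suc m)) * D x (Suc (Suc m)) = 2 * x * D x (Suc m) - 2 * D x m"
proof -
  define N where "N = Suc (Suc m)"
  have "real N * D x N = (\<Sum>i\<le>N. real i * ca x i * cc (N - i)) + (\<Sum>i\<le>N. ca x i * (real (N - i) * cc (N - i)))"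
    unfolding D_def sum_distrib_left sum.distrib[symmetric]
    by (intro sum.cong refl) (auto simp: of_nat_diff algebra_simps)
  also have "(\<Sum>i\<le>N. real i * ca x i * cc (N - i)) = (\<Sum>i\<le>Suc m. real (Suc i) * ca x (Suc i) * cc (Suc m - i))"
    unfolding N_def by (subst sum.atMost_Suc_shift) simp
  also have "\<dots> = (\<Sum>i\<le>Suc m. 2 * x * (ca x i * cc (Suc m - i)))"
    by (simp only: ca_Suc mult.assoc)
  also have "\<dots> = 2 * x * D x (Suc m)"
    unfolding D_def sum_distrib_left ..
  also have "(\<Sum>i\<le>N. ca x i * (real (N - i) * cc (N - i))) = (\<Sum>i\<le>m. ca x i * (-2 * cc (m - i)))"
    unfolding N_def sum.atMost_Suc cc_rec
    apply simp
    apply (intro sum.cong refl)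
    apply (auto simp: Suc_diff_le)
    done
  also have "\<dots> = - 2 * D x m" unfolding D_def sum_distrib_left by (simp add: algebra_simps)
  finally show ?thesis unfolding N_def by simp
qed

lemma H2_0_D: "poly (H2 m 0) x = fact m * D x m"
proof -
  have "poly (H2 m 0) x = fact m * D x m \<and> poly (H2 (Suc m) 0) x = fact (Suc m) * D x (Suc m)"
  proof (induction m)
    case 0
    have "poly (H2 0 1) x = x" by (simp add: H2_def monom_Suc)
    then show ?case by (simp add: H2_def H2_Suc_0 D_def ca_def cc_def hermite_op_def)
  next
    case (Suc m)
    have "poly (H2 (Suc (Suc m)) 0) x = 2 * (x * poly (H2 (Suc m) 0) x - real (Suc m) * poly (H2 m 0) x)"
      using H2_Suc_0[of "Suc m" x] H2_Suc_n[of "Suc m" 0 x] by simp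
    also have "\<dots> = fact (Suc m) * (2 * x * D x (Suc m) - 2 * D x m)"
      using Suc.IH by (simp add: algebra_simps)
    also have "\<dots> = fact (Suc m) * (real (Suc (Suc m)) * D x (Suc (Suc m)))"
      using D_rec[of m x] by simp
    also have "\<dots> = fact (Suc (Suc m)) * D x (Suc (Suc m))"
      by (metis fact_Suc mult.assoc mult.commute)
    finally show ?case using Suc.IH by simp
  qed
  then show ?thesis by simp
qed


lemma exp_sums_real: "(\<lambda>n. y ^ n / fact n) sums exp (y::real)"
  using exp_converges[of y] by (simp add: divide_inverse mult.commute)

lemma ca_eq: "ca x i * u ^ i = (2 * x * u) ^ i / fact i"
  unfolding ca_def by (simp add: power_mult_distrib)

lemma ca_sums: "(\<lambda>i. ca x i * u ^ i) sums exp (2 * x * u)"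
  unfolding ca_eq by (rule exp_sums_real)

lemma ca_abs: "\<bar>ca x i\<bar> * \<bar>u\<bar> ^ i = ca \<bar>x\<bar> i * \<bar>u\<bar> ^ i"
  unfolding ca_def by (simp add: power_abs abs_mult)

lemma cc_even_eq: "cc k * u ^ k = (if even k then (- (u^2)) ^ (k div 2) / fact (k div 2) else 0)"
proof (cases "even k")
  case True
  then obtain j where "k = 2 * j" by blast
  then show ?thesis by (simp add: cc_def power_mult power_mult_distrib[symmetric])
qed (simp add: cc_def)

lemma cc_sums: "(\<lambda>k. cc k * u ^ k) sums exp (- (u^2))"
  unfolding cc_even_eq using sums_if[OF sums_zero exp_sums_real[of "- (u^2)"]] by simp

lemma cc_abs_eq: "\<bar>cc k\<bar> * \<bar>u\<bar> ^ k = (if even k then (u^2) ^ (k div 2) / fact (k div 2) else 0)"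
proof (cases "even k")
  case True
  then obtain j where "k = 2 * j" by blast
  then show ?thesis by (simp add: cc_def power_mult abs_mult power_abs)
qed (simp add: cc_def)

lemma cc_abs_sums: "(\<lambda>k. \<bar>cc k\<bar> * \<bar>u\<bar> ^ k) sums exp (u^2)"
  unfolding cc_abs_eq using sums_if[OF sums_zero exp_sums_real[of "u^2"]] by simp

definition Dp :: "real \<Rightarrow> nat \<Rightarrow> real" where "Dp x m = (\<Sum>i\<le>m. \<bar>ca x i\<bar> * \<bar>cc (m - i)\<bar>)"

lemma conv_pow: "(\<Sum>i\<le>k. (f i * u ^ i) * (g (k - i) * u ^ (k - i))) = (\<Sum>i\<le>k. f i * g (k - i)) * (u::real) ^ k"
  unfolding sum_distrib_right
proof (intro sum.cong refl)
  fix i assume "i \<in> {..k}"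
  then have "u ^ i * u ^ (k - i) = u ^ k" by (simp add: power_add[symmetric])
  then show "f i * u ^ i * (g (k - i) * u ^ (k - i)) = f i * g (k - i) * u ^ k"
    by (metis mult.assoc mult.left_commute)
qed

lemma D_sums: "(\<lambda>k. D x k * u ^ k) sums (exp (2 * x * u) * exp (- (u^2)))"
proof -
  have s1: "summable (\<lambda>i. norm (ca x i * u ^ i))"
    using ca_sums[of "\<bar>x\<bar>" "\<bar>u\<bar>"] by (simp add: abs_mult power_abs ca_abs sums_summable[of _ "exp (2 * \<bar>x\<bar> * \<bar>u\<bar>)"])
  have s2: "summable (\<lambda>i. norm (cc i * u ^ i))"
    using cc_abs_sums[of u] by (simp add: abs_mult power_abs sums_summable[of _ "exp (u^2)"])
  from Cauchy_product_sums[OF s1 s2] show ?thesis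
    unfolding conv_pow D_def[symmetric] using sums_unique[OF ca_sums] sums_unique[OF cc_sums] by simp
qed

lemma Dp_sums: "(\<lambda>k. Dp x k * \<bar>u\<bar> ^ k) sums (exp (2 * \<bar>x\<bar> * \<bar>u\<bar>) * exp (u^2))"
proof -
  have A: "(\<lambda>i. \<bar>ca x i\<bar> * \<bar>u\<bar> ^ i) sums exp (2 * \<bar>x\<bar> * \<bar>u\<bar>)"
    unfolding ca_abs by (rule ca_sums)
  have s1: "summable (\<lambda>i. norm (\<bar>ca x i\<bar> * \<bar>u\<bar> ^ i))"
    using A by (simp add: abs_mult power_abs sums_summable[of _ "exp (2 * \<bar>x\<bar> * \<bar>u\<bar>)"])
  have s2: "summable (\<lambda>i. norm (\<bar>cc i\<bar> * \<bar>u\<bar> ^ i))"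
    using cc_abs_sums[of u] by (simp add: abs_mult power_abs sums_summable[of _ "exp (u^2)"])
  from Cauchy_product_sums[OF s1 s2] show ?thesis
    unfolding conv_pow[of "\<lambda>i. \<bar>ca x i\<bar>" "\<bar>u\<bar>" "\<lambda>j. \<bar>cc j\<bar>"] Dp_def[symmetric] using sums_unique[OF A] sums_unique[OF cc_abs_sums] by simp
qed


lemma shift_gen:
  fixes F :: "nat \<Rightarrow> nat \<Rightarrow> real"
  assumes rec: "\<And>m n. F m (Suc n) = x0 * F m n + s * (real m * F (m - 1) n)"
    and base: "(\<lambda>m. F m 0 * (u ^ m / fact m)) sums G"
  shows "(\<lambda>m. F m n * (u ^ m / fact m)) sums (G * (x0 + s * u) ^ n)"
proof (induction n)
  case 0 then show ?case using base by simp
next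
  case (Suc n)
  define S where "S = G * (x0 + s * u) ^ n"
  have eq: "(\<lambda>m. real (Suc m) * F (Suc m - 1) n * (u ^ Suc m / fact (Suc m))) = (\<lambda>m. u * (F m n * (u ^ m / fact m)))"
    by (rule ext) (simp add: fact_Suc field_simps del: of_nat_Suc)
  have "(\<lambda>m. u * (F m n * (u ^ m / fact m))) sums (u * S)"
    using sums_mult[OF Suc.IH, of u] unfolding S_def .
  then have "(\<lambda>m. real (Suc m) * F (Suc m - 1) n * (u ^ Suc m / fact (Suc m))) sums (u * S)"
    unfolding eq .
  then have A: "(\<lambda>m. real m * F (m - 1) n * (u ^ m / fact m)) sums (u * S)"
    using sums_Suc_iff[of "\<lambda>m. real m * F (m - 1) n * (u ^ m / fact m)"] by simp
  have B: "(\<lambda>m. x0 * (F m n * (u ^ m / fact m)) + s * (real m * F (m - 1) n * (u ^ m / fact m))) sums (x0 * S + s * (u * S))"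
    by (intro sums_add sums_mult A) (use Suc.IH in \<open>simp add: S_def\<close>)
  have "(\<lambda>m. F m (Suc n) * (u ^ m / fact m)) = (\<lambda>m. x0 * (F m n * (u ^ m / fact m)) + s * (real m * F (m - 1) n * (u ^ m / fact m)))"
    by (rule ext) (simp add: rec algebra_simps)
  moreover have "x0 * S + s * (u * S) = G * (x0 + s * u) ^ Suc n"
    unfolding S_def by (simp add: algebra_simps)
  ultimately show ?case using B by simp
qed

lemma H_sums: "(\<lambda>m. poly (H2 m n) x * (u ^ m / fact m)) sums (exp (2 * x * u) * exp (- (u^2)) * (x + (-1) * u) ^ n)"
proof (rule shift_gen)
  show "poly (H2 m (Suc n)) x = x * poly (H2 m n) x + (-1) * (real m * poly (H2 (m - 1) n) x)" for m n
    using H2_Suc_n[of m n x] by simp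
  show "(\<lambda>m. poly (H2 m 0) x * (u ^ m / fact m)) sums (exp (2 * x * u) * exp (- (u^2)))"
    using D_sums[of x u] by (simp add: H2_0_D)
qed

fun Mj :: "real \<Rightarrow> nat \<Rightarrow> nat \<Rightarrow> real" where
  "Mj x m 0 = fact m * Dp x m"
| "Mj x m (Suc n) = \<bar>x\<bar> * Mj x m n + 1 * (real m * Mj x (m - 1) n)"

lemma Mj_sums: "(\<lambda>m. Mj x m n * (\<bar>u\<bar> ^ m / fact m)) sums (exp (2 * \<bar>x\<bar> * \<bar>u\<bar>) * exp (u^2) * (\<bar>x\<bar> + 1 * \<bar>u\<bar>) ^ n)"
proof (rule shift_gen)
  show "Mj x m (Suc n) = \<bar>x\<bar> * Mj x m n + 1 * (real m * Mj x (m - 1) n)" for m n by simp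
  show "(\<lambda>m. Mj x m 0 * (\<bar>u\<bar> ^ m / fact m)) sums (exp (2 * \<bar>x\<bar> * \<bar>u\<bar>) * exp (u^2))"
    using Dp_sums[of x u] by simp
qed

lemma Mj_nonneg: "Mj x m n \<ge> 0"
  by (induction n arbitrary: m) (auto simp: Dp_def intro!: sum_nonneg mult_nonneg_nonneg)

lemma Mj_bound: "\<bar>poly (H2 m n) x\<bar> \<le> Mj x m n"
proof (induction n arbitrary: m)
  case 0
  have "\<bar>D x m\<bar> \<le> Dp x m" unfolding D_def Dp_def
    by (rule order_trans[OF sum_abs]) (simp add: abs_mult)
  then show ?case by (simp add: H2_0_D abs_mult mult_left_mono)
next
  case (Suc n)
  have "\<bar>poly (H2 m (Suc n)) x\<bar> \<le> \<bar>x\<bar> * \<bar>poly (H2 m n) x\<bar> + real m * \<bar>poly (H2 (m - 1) n) x\<bar>"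
    unfolding H2_Suc_n by (rule order_trans[OF abs_triangle_ineq4]) (simp add: abs_mult)
  also have "\<dots> \<le> \<bar>x\<bar> * Mj x m n + real m * Mj x (m - 1) n"
    by (intro add_mono mult_left_mono Suc.IH) auto
  finally show ?case by simp
qed


theorem mainTheorem12:
  fixes x u v :: real
  shows "((\<lambda>(m, n). poly (H2 m n) x * (u ^ m / fact m) * (v ^ n / fact n))
           has_sum exp (- u\<^sup>2 + (2 * u + v) * x - u * v)) (UNIV :: (nat \<times> nat) set)"
proof -
  define G where "G = exp (2 * x * u) * exp (- (u^2))"
  define Gp where "Gp = exp (2 * \<bar>x\<bar> * \<bar>u\<bar>) * exp (u^2)"
  define t where "t = (\<lambda>n m. poly (H2 m n) x * (u ^ m / fact m) * (v ^ n / fact n))"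
  define T where "T = (\<lambda>n m. Mj x m n * (\<bar>u\<bar> ^ m / fact m) * (\<bar>v\<bar> ^ n / fact n))"
  have T_nonneg: "T n m \<ge> 0" for n m
    unfolding T_def by (intro mult_nonneg_nonneg Mj_nonneg) auto
  have tT: "norm (t n m) \<le> T n m" for n m
    unfolding t_def T_def
    by (simp add: abs_mult power_abs del: times_divide_eq_right times_divide_eq_left)
       (intro mult_right_mono Mj_bound; simp)
  have inner_T: "(\<lambda>m. T n m) sums (Gp * (\<bar>x\<bar> + \<bar>u\<bar>) ^ n * (\<bar>v\<bar> ^ n / fact n))" for n
    unfolding T_def Gp_def using sums_mult2[OF Mj_sums[of x n u], of "\<bar>v\<bar> ^ n / fact n"] by simp
  have inner_t: "(\<lambda>m. t n m) sums (G * (x - u) ^ n * (v ^ n / fact n))" for n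
    unfolding t_def G_def using sums_mult2[OF H_sums[of n x u], of "v ^ n / fact n"] by simp
  have outer_T: "(\<lambda>n. Gp * (\<bar>x\<bar> + \<bar>u\<bar>) ^ n * (\<bar>v\<bar> ^ n / fact n)) sums (Gp * exp ((\<bar>x\<bar> + \<bar>u\<bar>) * \<bar>v\<bar>))"
    using sums_mult[OF exp_sums_real[of "(\<bar>x\<bar> + \<bar>u\<bar>) * \<bar>v\<bar>"], of Gp]
    by (simp add: power_mult_distrib mult.assoc)
  have outer_t: "(\<lambda>n. G * (x - u) ^ n * (v ^ n / fact n)) sums (G * exp ((x - u) * v))"
    using sums_mult[OF exp_sums_real[of "(x - u) * v"], of G]
    by (simp add: power_mult_distrib mult.assoc)
  have outer_t_norm: "summable (\<lambda>n. norm (G * (x - u) ^ n * (v ^ n / fact n)))"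
    using sums_summable[OF sums_mult[OF exp_sums_real[of "\<bar>(x - u) * v\<bar>"], of "\<bar>G\<bar>"]]
    by (simp add: abs_mult power_abs power_mult_distrib mult.assoc)
  have Gp_nonneg: "Gp \<ge> 0" unfolding Gp_def by simp
  have sumT: "(\<lambda>(n, m). T n m) summable_on Sigma UNIV (\<lambda>_. UNIV)"
  proof (rule summable_on_SigmaI)
    show "((\<lambda>m. (\<lambda>(n, m). T n m) (n, m)) has_sum (Gp * (\<bar>x\<bar> + \<bar>u\<bar>) ^ n * (\<bar>v\<bar> ^ n / fact n))) UNIV" for n
      using sums_nonneg_imp_has_sum[OF inner_T T_nonneg] by simp
    show "(\<lambda>n. Gp * (\<bar>x\<bar> + \<bar>u\<bar>) ^ n * (\<bar>v\<bar> ^ n / fact n)) summable_on UNIV"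
      using sums_nonneg_imp_has_sum[OF outer_T] Gp_nonneg by (auto simp: summable_on_def)
  qed (auto simp: T_nonneg)
  have "(\<lambda>p. norm ((\<lambda>(n, m). t n m) p)) summable_on Sigma UNIV (\<lambda>_. UNIV)"
    by (rule Infinite_Sum.abs_summable_on_comparison_test'[OF sumT]) (use tT in auto)
  then have sumt: "(\<lambda>(n, m). t n m) summable_on Sigma UNIV (\<lambda>_. UNIV)"
    by (rule Infinite_Sum.abs_summable_summable)
  have hs: "((\<lambda>(n, m). t n m) has_sum (G * exp ((x - u) * v))) (Sigma UNIV (\<lambda>_. UNIV))"
  proof (rule has_sum_SigmaI[OF _ _ sumt])
    show "((\<lambda>m. (\<lambda>(n, m). t n m) (n, m)) has_sum (G * (x - u) ^ n * (v ^ n / fact n))) UNIV" for n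
    proof -
      have "summable (\<lambda>m. norm (t n m))"
        by (rule summable_comparison_test[OF _ sums_summable[OF inner_T[of n]]]) (use tT in auto)
      then show ?thesis using norm_summable_imp_has_sum[OF _ inner_t] by simp
    qed
    show "((\<lambda>n. G * (x - u) ^ n * (v ^ n / fact n)) has_sum (G * exp ((x - u) * v))) UNIV"
      by (rule norm_summable_imp_has_sum[OF outer_t_norm outer_t])
  qed
  have val: "G * exp ((x - u) * v) = exp (- u\<^sup>2 + (2 * u + v) * x - u * v)"
  proof -
    have "G * exp ((x - u) * v) = exp (2 * x * u + - (u^2) + (x - u) * v)"
      unfolding G_def by (simp only: exp_add)
    also have "2 * x * u + - (u^2) + (x - u) * v = - u\<^sup>2 + (2 * u + v) * x - u * v"
      by (simp add: algebra_simps)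
    finally show ?thesis .
  qed
  have "((\<lambda>(n, m). t n m) has_sum (G * exp ((x - u) * v))) UNIV"
    using hs by simp
  then have "((\<lambda>p. (\<lambda>(n, m). t n m) (prod.swap p)) has_sum (G * exp ((x - u) * v))) UNIV"
    using has_sum_reindex_bij_betw[OF bij_swap] by blast
  moreover have "(\<lambda>p. (\<lambda>(n, m). t n m) (prod.swap p)) = (\<lambda>(m, n). poly (H2 m n) x * (u ^ m / fact m) * (v ^ n / fact n))"
    by (auto simp: t_def)
  ultimately show ?thesis using val by simp
qed

end
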